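(* Let $\mathcal A\subset\mathbb R^n$ be compact with diameter $D_{\mathcal A}<\infty$, let $\mathcal X=\mathrm{conv}(\mathcal A)$, let $f$ have $L$-Lipschitz gradient, and let $\eta\in(1,2)$. Run the AC-FW algorithm with the away-step Frank-Wolfe subroutine and a damping sequence satisfying Condition (D), with $L_0>0$. Then the subroutine satisfies parts (i) and (ii) of Condition (S); more precisely, for every $t\ge0$, $$|\mathcal G\cap\mathcal I_\eta\cap[t]|\ge\frac{t+1}{2}-\left\lfloor\log_\eta\!\left(\frac{L}{rL_0}\right)\right\rfloor.$$ If additionally $f$ is convex, then part (iii) of Condition (S) holds with $R=1$.
   Context: $D_{\mathcal A}:=\sup_{x,y\in\mathcal A}\|x-y\|_2$; $f:\mathbb R^n\to\mathbb R$ is differentiable with $\|\nabla f(x)-\nabla f(y)\|_2\le L\|x-y\|_2$. $x^\star$ is an optimal solution of $\min_{x\in\mathcal X}f(x)$. For $x\ne y$, $\ell(x,y):=2|f(y)-f(x)-\nabla f(x)^\top(y-x)|/\|y-x\|_2^2$, $\ell(x,x):=0$. AC-FW algorithm: given $\{r_t\}_{t\ge0}$ and a subroutine, pick $x_{-1}\in\mathcal A$, $x_0\in\arg\min_{v\in\mathcal A}\nabla f(x_{-1})^\top v$, $L_0:=\ell(x_{-1},x_0)$. For $t=0,1,\dots$: $v_t\in\arg\min_{v\in\mathcal A}\nabla f(x_t)^\top v$; the subroutine returns $(d_t,\gamma_t^{\max})$; $\gamma_t:=\min\{\nabla f(x_t)^\top d_t/(L_t\|d_t\|_2^2),\gamma_t^{\max}\}$;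 $\bar x_{t+1}:=x_t-\gamma_td_t$; $L_{t+1}:=\max\{\ell(x_t,\bar x_{t+1}),r_tL_t\}$; $x_{t+1}:=\bar x_{t+1}$ if $f(\bar x_{t+1})<f(x_t)$, else $x_{t+1}:=x_t$. Away-step Frank-Wolfe subroutine: it maintains weights $\alpha_{s,t}\ge0$ ($s\in\mathcal A$), active set $\mathcal S_t:=\{s:\alpha_{s,t}>0\}$, $x_t=\sum_s\alpha_{s,t}s$, initially $\mathcal S_0=\{x_0\}$, $\alpha_{x_0,0}=1$. At iteration $t$: $s_t\in\arg\max_{s\in\mathcal S_t}\nabla f(x_t)^\top s$. If $\nabla f(x_t)^\top(x_t-v_t)\ge\nabla f(x_t)^\top(s_t-x_t)$ (FW step): $d_t:=x_t-v_t$, $\gamma_t^{\max}:=1$; otherwise (away step): $d_t:=s_t-x_t$, $\gamma_t^{\max}:=\alpha_{s_t,t}/(1-\alpha_{s_t,t})$. If $x_{t+1}=x_t$, weights are unchanged; if an FW step is accepted, $\alpha_{s,t+1}:=(1-\gamma_t)\alpha_{s,t}+\gamma_t\mathbf 1\{s=v_t\}$; if an away step is accepted, $\alpha_{s,t+1}:=(1+\gamma_t)\alpha_{s,t}-\gamma_t\mathbf 1\{s=s_t\}$. Then $\mathcal S_{t+1}:=\{s:\alpha_{s,t+1}>0\}$. $[t]:=\{0,\dots,t\}$; $\mathcal I_\eta:=\{t\ge0:L_{t+1}\le\eta L_t\}$; $\mathcal G:=\{t\ge0:\gamma_t^{\max}\ge1\text{ or }\gamma_t<\gamma_t^{\max}\}$.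 Condition (D): $r_t\in(0,1]$ for all $t$ and $r:=\prod_{t\ge0}r_t\in(0,1]$. Condition (S): for all $t\ge0$: (i) $\|d_t\|_2\le D_{\mathcal A}$ and $x_t-\gamma d_t\in\mathcal X$ for all finite $\gamma\in[0,\gamma_t^{\max}]$; (ii) $\mathcal G$ is infinite; (iii) if $f$ is convex, there is $R\ge1$ independent of $t$ with $\nabla f(x_t)^\top d_t\ge(f(x_t)-f(x^\star))/R$. *)

theory Defs
  imports "HOL-Analysis.Analysis"
begin

definition ell :: "('a::real_inner \<Rightarrow> real) \<Rightarrow> ('a \<Rightarrow> 'a) \<Rightarrow> 'a \<Rightarrow> 'a \<Rightarrow> real" where
  "ell f g x y = (if x = y then 0
     else 2 * \<bar>f y - f x - g x \<bullet> (y - x)\<bar> / (norm (y - x))\<^sup>2)"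

text \<open>Sequences: x (iterates), Ls (estimates L_t), v (FW vertices), s (away vertices),
  d (directions), gmax (maximal step sizes), gam (step sizes), alpha (weights).
  All argmin/argmax choices are arbitrary (any tie-breaking).\<close>
definition acfw_afw_run ::
  "'a::real_inner set \<Rightarrow> ('a \<Rightarrow> real) \<Rightarrow> ('a \<Rightarrow> 'a) \<Rightarrow> (nat \<Rightarrow> real) \<Rightarrow> 'a \<Rightarrow>
   (nat \<Rightarrow> 'a) \<Rightarrow> (nat \<Rightarrow> real) \<Rightarrow> (nat \<Rightarrow> 'a) \<Rightarrow> (nat \<Rightarrow> 'a) \<Rightarrow> (nat \<Rightarrow> 'a) \<Rightarrow>
   (nat \<Rightarrow> real) \<Rightarrow> (nat \<Rightarrow> real) \<Rightarrow> (nat \<Rightarrow> 'a \<Rightarrow> real) \<Rightarrow> bool" where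
  "acfw_afw_run A f g r xm1 x Ls v s d gmax gam alpha \<longleftrightarrow>
     xm1 \<in> A \<and> x 0 \<in> A \<and> (\<forall>u\<in>A. g xm1 \<bullet> x 0 \<le> g xm1 \<bullet> u) \<and>
     Ls 0 = ell f g xm1 (x 0) \<and>
     alpha 0 = (\<lambda>a. if a = x 0 then 1 else 0) \<and>
     (\<forall>t. v t \<in> A \<and> (\<forall>u\<in>A. g (x t) \<bullet> v t \<le> g (x t) \<bullet> u) \<and>
        0 < alpha t (s t) \<and> (\<forall>a. 0 < alpha t a \<longrightarrow> g (x t) \<bullet> a \<le> g (x t) \<bullet> s t) \<and>
        (if g (x t) \<bullet> (x t - v t) \<ge> g (x t) \<bullet> (s t - x t)
         then d t = x t - v t \<and> gmax t = 1
         else d t = s t - x t \<and> gmax t = alpha t (s t) / (1 - alpha t (s t))) \<and>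
        gam t = min (g (x t) \<bullet> d t / (Ls t * (norm (d t))\<^sup>2)) (gmax t) \<and>
        Ls (Suc t) = max (ell f g (x t) (x t - gam t *\<^sub>R d t)) (r t * Ls t) \<and>
        (if f (x t - gam t *\<^sub>R d t) < f (x t)
         then x (Suc t) = x t - gam t *\<^sub>R d t \<and>
              alpha (Suc t) =
                (if g (x t) \<bullet> (x t - v t) \<ge> g (x t) \<bullet> (s t - x t)
                 then (\<lambda>a. (1 - gam t) * alpha t a + gam t * (if a = v t then 1 else 0))
                 else (\<lambda>a. (1 + gam t) * alpha t a - gam t * (if a = s t then 1 else 0)))
         else x (Suc t) = x t \<and> alpha (Suc t) = alpha t))"

end

theory Submission
  imports Defs
begin


lemma line_deriv:
  fixes f :: "'a::real_inner \<Rightarrow> real"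
  assumes grad: "\<And>y. (f has_derivative (\<lambda>h. g y \<bullet> h)) (at y)"
  shows "((\<lambda>t. f (x + t *\<^sub>R h)) has_real_derivative (g (x + t *\<^sub>R h) \<bullet> h)) (at t)"
proof -
  have "((\<lambda>t. x + t *\<^sub>R h) has_derivative (\<lambda>t. t *\<^sub>R h)) (at t)"
    by (auto intro!: derivative_eq_intros)
  from has_derivative_compose[OF this grad]
  have "((\<lambda>t. f (x + t *\<^sub>R h)) has_derivative (\<lambda>u. g (x + t *\<^sub>R h) \<bullet> (u *\<^sub>R h))) (at t)" .
  moreover have "(\<lambda>u. g (x + t *\<^sub>R h) \<bullet> (u *\<^sub>R h)) = (*) (g (x + t *\<^sub>R h) \<bullet> h)"
    by (rule ext) simp
  ultimately show ?thesis unfolding has_field_derivative_def by simp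
qed

lemma taylor_bound:
  fixes f :: "'a::real_inner \<Rightarrow> real"
  assumes grad: "\<And>y. (f has_derivative (\<lambda>h. g y \<bullet> h)) (at y)"
    and lip: "\<And>y z. norm (g y - g z) \<le> Lf * norm (y - z)"
  shows "\<bar>f y - f x - g x \<bullet> (y - x)\<bar> \<le> Lf / 2 * (norm (y - x))\<^sup>2"
proof -
  define h where "h = y - x"
  have y: "y = x + 1 *\<^sub>R h" by (simp add: h_def)
  have dd: "\<bar>g (x + t *\<^sub>R h) \<bullet> h - g x \<bullet> h\<bar> \<le> Lf * t * (norm h)\<^sup>2" if "0 \<le> t" for t
  proof -
    have "\<bar>g (x + t *\<^sub>R h) \<bullet> h - g x \<bullet> h\<bar> = \<bar>(g (x + t *\<^sub>R h) - g x) \<bullet> h\<bar>"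
      by (simp add: inner_diff_left)
    also have "\<dots> \<le> norm (g (x + t *\<^sub>R h) - g x) * norm h" by (rule Cauchy_Schwarz_ineq2)
    also have "\<dots> \<le> Lf * norm (t *\<^sub>R h) * norm h"
      using lip[of "x + t *\<^sub>R h" x] by (simp add: mult_right_mono)
    also have "\<dots> = Lf * t * (norm h)\<^sup>2" using that by (simp add: power2_eq_square)
    finally show ?thesis .
  qed
  have up: "(\<lambda>t. f (x + t *\<^sub>R h) - t * (g x \<bullet> h) - Lf / 2 * t\<^sup>2 * (norm h)\<^sup>2) 1
      \<le> (\<lambda>t. f (x + t *\<^sub>R h) - t * (g x \<bullet> h) - Lf / 2 * t\<^sup>2 * (norm h)\<^sup>2) 0"
  proof (rule DERIV_nonpos_imp_nonincreasing[of 0 1])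
    fix t :: real assume "0 \<le> t" "t \<le> 1"
    show "\<exists>y. ((\<lambda>t. f (x + t *\<^sub>R h) - t * (g x \<bullet> h) - Lf / 2 * t\<^sup>2 * (norm h)\<^sup>2) has_real_derivative y) (at t) \<and> y \<le> 0"
      apply (rule exI, rule conjI)
       apply (rule derivative_eq_intros line_deriv[OF grad] | simp)+
      using dd[OF \<open>0 \<le> t\<close>] by (simp add: algebra_simps)
  qed simp
  have lo: "(\<lambda>t. - f (x + t *\<^sub>R h) + t * (g x \<bullet> h) - Lf / 2 * t\<^sup>2 * (norm h)\<^sup>2) 1
      \<le> (\<lambda>t. - f (x + t *\<^sub>R h) + t * (g x \<bullet> h) - Lf / 2 * t\<^sup>2 * (norm h)\<^sup>2) 0"
  proof (rule DERIV_nonpos_imp_nonincreasing[of 0 1])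
    fix t :: real assume "0 \<le> t" "t \<le> 1"
    show "\<exists>y. ((\<lambda>t. - f (x + t *\<^sub>R h) + t * (g x \<bullet> h) - Lf / 2 * t\<^sup>2 * (norm h)\<^sup>2) has_real_derivative y) (at t) \<and> y \<le> 0"
      apply (rule exI, rule conjI)
       apply (rule derivative_eq_intros line_deriv[OF grad] | simp)+
      using dd[OF \<open>0 \<le> t\<close>] by (simp add: algebra_simps)
  qed simp
  have "f y - f x - g x \<bullet> (y - x) \<le> Lf / 2 * (norm (y - x))\<^sup>2"
    "-(f y - f x - g x \<bullet> (y - x)) \<le> Lf / 2 * (norm (y - x))\<^sup>2"
    using up lo unfolding h_def by simp_all
  then show ?thesis by (simp only: abs_le_iff)
qed

lemma ell_le:
  fixes f :: "'a::real_inner \<Rightarrow> real"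
  assumes grad: "\<And>y. (f has_derivative (\<lambda>h. g y \<bullet> h)) (at y)"
    and lip: "\<And>y z. norm (g y - g z) \<le> Lf * norm (y - z)"
    and "0 \<le> Lf"
  shows "ell f g x y \<le> Lf"
proof (cases "x = y")
  case True
  then show ?thesis using True assms(3) by (simp add: ell_def)
next
  case False
  then have p: "0 < (norm (y - x))\<^sup>2" by simp
  have "2 * \<bar>f y - f x - g x \<bullet> (y - x)\<bar> \<le> Lf * (norm (y - x))\<^sup>2"
    using taylor_bound[OF grad lip, of y x] by simp
  then show ?thesis using False p by (simp add: ell_def divide_le_eq)
qed

lemma convex_grad:
  fixes f :: "'a::real_inner \<Rightarrow> real"
  assumes grad: "\<And>y. (f has_derivative (\<lambda>h. g y \<bullet> h)) (at y)"
    and cvx: "convex_on UNIV f"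
  shows "f y - f x \<ge> g x \<bullet> (y - x)"
proof -
  define h where "h = y - x"
  have c: "convex_on UNIV (\<lambda>t. f (x + t *\<^sub>R h))"
  proof (rule convex_onI)
    fix u a b :: real assume "0 < u" "u < 1"
    have e: "x + ((1 - u) *\<^sub>R a + u *\<^sub>R b) *\<^sub>R h = (1 - u) *\<^sub>R (x + a *\<^sub>R h) + u *\<^sub>R (x + b *\<^sub>R h)"
      by (simp add: algebra_simps)
    show "f (x + ((1 - u) *\<^sub>R a + u *\<^sub>R b) *\<^sub>R h) \<le> (1 - u) * f (x + a *\<^sub>R h) + u * f (x + b *\<^sub>R h)"
      unfolding e using convex_onD[OF cvx, of u "x + a *\<^sub>R h" "x + b *\<^sub>R h"] \<open>0 < u\<close> \<open>u < 1\<close> by simp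
  qed simp
  have "(\<lambda>t. f (x + t *\<^sub>R h)) 1 - (\<lambda>t. f (x + t *\<^sub>R h)) 0 \<ge> (g (x + 0 *\<^sub>R h) \<bullet> h) * (1 - 0)"
    using line_deriv[OF grad, of x h 0]
    by (intro convex_on_imp_above_tangent[OF c]) (auto intro: has_field_derivative_at_within)
  then show ?thesis by (simp add: h_def)
qed



definition wts :: "'a::real_vector set \<Rightarrow> ('a \<Rightarrow> real) \<Rightarrow> 'a \<Rightarrow> bool" where
  "wts A al p \<longleftrightarrow> (\<forall>a. 0 \<le> al a) \<and> finite {a. 0 < al a} \<and> {a. 0 < al a} \<subseteq> A \<and>
     sum al {a. 0 < al a} = 1 \<and> p = (\<Sum>a\<in>{a. 0 < al a}. al a *\<^sub>R a)"

lemma supp_sums: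
  fixes al :: "'a::real_vector \<Rightarrow> real"
  assumes "finite T" "{a. 0 < al a} \<subseteq> T" "\<forall>a. 0 \<le> al a"
  shows "sum al {a. 0 < al a} = sum al T" "(\<Sum>a\<in>{a. 0 < al a}. al a *\<^sub>R a) = (\<Sum>a\<in>T. al a *\<^sub>R a)"
proof -
  have z: "al a = 0" if "a \<in> T - {a. 0 < al a}" for a using that assms(3) by (auto simp: less_le)
  show "sum al {a. 0 < al a} = sum al T"
    by (rule sum.mono_neutral_left[OF assms(1,2)]) (use z in auto)
  show "(\<Sum>a\<in>{a. 0 < al a}. al a *\<^sub>R a) = (\<Sum>a\<in>T. al a *\<^sub>R a)"
    by (rule sum.mono_neutral_left[OF assms(1,2)]) (use z in auto)
qed

lemma wts_hull:
  assumes "wts A al p" shows "p \<in> convex hull A"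
proof -
  let ?S = "{a. 0 < al a}"
  have "p \<in> convex hull ?S"
    using assms unfolding wts_def convex_hull_finite[of ?S, OF conjunct1[OF conjunct2[OF assms[unfolded wts_def]]]]
    by blast
  moreover have "convex hull ?S \<subseteq> convex hull A" using assms unfolding wts_def by (intro hull_mono) blast
  ultimately show ?thesis by blast
qed

lemma wts_nonempty:
  assumes "wts A al p" shows "1 \<le> card {a. 0 < al a}"
proof -
  have "{a. 0 < al a} \<noteq> {}" using assms unfolding wts_def by (metis sum.empty zero_neq_one)
  moreover have "finite {a. 0 < al a}" using assms unfolding wts_def by auto
  ultimately show ?thesis by (simp add: Suc_le_eq card_gt_0_iff)
qed

lemma hull_min_lin:
  fixes G :: "'a::real_inner"
  assumes "\<forall>u\<in>A. G \<bullet> v \<le> G \<bullet> u" "p \<in> convex hull A"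
  shows "G \<bullet> v \<le> G \<bullet> p"
proof -
  have "convex hull A \<subseteq> {y. G \<bullet> y \<ge> G \<bullet> v}"
    by (rule hull_minimal) (use assms(1) convex_halfspace_ge in auto)
  then show ?thesis using assms(2) by auto
qed

lemma hull_diam:
  fixes A :: "'a::real_normed_vector set"
  assumes "bounded A" "v \<in> A" "p \<in> convex hull A"
  shows "norm (p - v) \<le> diameter A" "norm (v - p) \<le> diameter A"
proof -
  have "convex hull A \<subseteq> cball v (diameter A)"
    by (rule hull_minimal) (use assms(1,2) diameter_bounded_bound in \<open>auto simp: subset_iff\<close>)
  then have "dist v p \<le> diameter A" using assms(3) by auto
  then show "norm (p - v) \<le> diameter A" "norm (v - p) \<le> diameter A"
    by (simp_all add: dist_norm norm_minus_commute)
qed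

lemma wts_facts:
  fixes G :: "'a::real_inner"
  assumes w: "wts A al p" and vA: "\<forall>u\<in>A. G \<bullet> v \<le> G \<bullet> u"
    and s: "0 < al s" and smax: "\<forall>a. 0 < al a \<longrightarrow> G \<bullet> a \<le> G \<bullet> s"
  shows "0 \<le> G \<bullet> (p - v)" "0 \<le> G \<bullet> (s - p)"
    "\<not> G \<bullet> (p - v) \<ge> G \<bullet> (s - p) \<Longrightarrow> al s < 1 \<and> s \<noteq> p"
proof -
  let ?S = "{a. 0 < al a}"
  have nn: "\<forall>a. 0 \<le> al a" and fin: "finite ?S" and sum1: "sum al ?S = 1"
    and pe: "p = (\<Sum>a\<in>?S. al a *\<^sub>R a)" using w unfolding wts_def by auto
  show "0 \<le> G \<bullet> (p - v)" using hull_min_lin[OF vA wts_hull[OF w]] by (simp add: inner_diff_right)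
  have "G \<bullet> p = (\<Sum>a\<in>?S. al a * (G \<bullet> a))" unfolding pe by (simp add: inner_sum_right)
  also have "\<dots> \<le> (\<Sum>a\<in>?S. al a * (G \<bullet> s))"
    by (rule sum_mono) (use smax in \<open>auto intro: mult_left_mono\<close>)
  also have "\<dots> = G \<bullet> s" using sum1 by (simp add: sum_distrib_right[symmetric])
  finally show gs: "0 \<le> G \<bullet> (s - p)" by (simp add: inner_diff_right)
  assume nc: "\<not> G \<bullet> (p - v) \<ge> G \<bullet> (s - p)"
  have sS: "s \<in> ?S" using s by simp
  have split: "sum al ?S = al s + sum al (?S - {s})" using fin sS by (simp add: sum.remove)
  have "0 \<le> sum al (?S - {s})" using nn by (simp add: sum_nonneg)
  then have le1: "al s \<le> 1" using split sum1 by simp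
  have "al s \<noteq> 1"
  proof
    assume a1: "al s = 1"
    then have "sum al (?S - {s}) = 0" using split sum1 by simp
    then have e0: "sum al (?S - {s}) = 0" .
    have "?S - {s} = {}"
    proof (rule ccontr)
      assume "?S - {s} \<noteq> {}"
      then obtain b where b: "b \<in> ?S - {s}" by blast
      have "al b \<le> sum al (?S - {s})" by (rule member_le_sum) (use b nn fin in auto)
      then show False using b e0 by simp
    qed
    then have Ss: "?S = {s}" using sS by blast
    then have "p = s" using pe a1 by simp
    then show False using nc \<open>0 \<le> G \<bullet> (p - v)\<close> by simp
  qed
  then have "al s < 1" using le1 by simp
  moreover have "s \<noteq> p" using nc \<open>0 \<le> G \<bullet> (p - v)\<close> by auto
  ultimately show "al s < 1 \<and> s \<noteq> p" by simp
qed

lemma fw_update: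
  assumes w: "wts A al p" and vA: "v \<in> A" and g0: "0 \<le> \<gamma>" and g1: "\<gamma> \<le> 1"
  shows "wts A (\<lambda>a. (1 - \<gamma>) * al a + \<gamma> * (if a = v then 1 else 0)) (p - \<gamma> *\<^sub>R (p - v))"
    "card {a. 0 < (1 - \<gamma>) * al a + \<gamma> * (if a = v then 1 else 0)} \<le> card {a. 0 < al a} + 1"
proof -
  let ?S = "{a. 0 < al a}"
  let ?b = "\<lambda>a. (1 - \<gamma>) * al a + \<gamma> * (if a = v then 1 else 0)"
  let ?T = "insert v ?S"
  have nn: "\<forall>a. 0 \<le> al a" and fin: "finite ?S" and sub: "?S \<subseteq> A" and sum1: "sum al ?S = 1"
    and pe: "p = (\<Sum>a\<in>?S. al a *\<^sub>R a)" using w unfolding wts_def by auto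
  have finT: "finite ?T" using fin by simp
  have nnb: "\<forall>a. 0 \<le> ?b a" using nn g0 g1 by simp
  have subb: "{a. 0 < ?b a} \<subseteq> ?T"
  proof
    fix a assume "a \<in> {a. 0 < ?b a}"
    then have "0 < ?b a" by simp
    then show "a \<in> ?T" using nn g1 by (cases "a = v") (auto simp: less_le)
  qed
  have "?S \<subseteq> ?T" by auto
  note ss = supp_sums[OF finT this nn]
  have sT: "sum al ?T = 1" "(\<Sum>a\<in>?T. al a *\<^sub>R a) = p"
    using ss sum1 pe by simp_all
  have "sum ?b {a. 0 < ?b a} = sum ?b ?T" using supp_sums[OF finT subb nnb] by simp
  also have "\<dots> = (1 - \<gamma>) * sum al ?T + \<gamma> * (\<Sum>a\<in>?T. (if a = v then 1 else 0))"
    by (simp add: sum.distrib sum_distrib_left)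
  also have "\<dots> = 1" using sT finT by simp
  finally have s1: "sum ?b {a. 0 < ?b a} = 1" .
  have "(\<Sum>a\<in>{a. 0 < ?b a}. ?b a *\<^sub>R a) = (\<Sum>a\<in>?T. ?b a *\<^sub>R a)" using supp_sums[OF finT subb nnb] by simp
  also have "\<dots> = (\<Sum>a\<in>?T. (1 - \<gamma>) *\<^sub>R (al a *\<^sub>R a) + \<gamma> *\<^sub>R (if a = v then a else 0))"
    by (rule sum.cong) (auto simp: scaleR_add_left)
  also have "\<dots> = (1 - \<gamma>) *\<^sub>R (\<Sum>a\<in>?T. al a *\<^sub>R a) + \<gamma> *\<^sub>R (\<Sum>a\<in>?T. (if a = v then a else 0))"
    by (simp only: sum.distrib scaleR_sum_right)
  also have "\<dots> = p - \<gamma> *\<^sub>R (p - v)" using sT finT by (simp add: algebra_simps)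
  finally have pv: "p - \<gamma> *\<^sub>R (p - v) = (\<Sum>a\<in>{a. 0 < ?b a}. ?b a *\<^sub>R a)" by simp
  have "finite {a. 0 < ?b a}" using finT subb finite_subset by blast
  moreover have "{a. 0 < ?b a} \<subseteq> A" using subb sub vA by blast
  ultimately show "wts A ?b (p - \<gamma> *\<^sub>R (p - v))" unfolding wts_def using nnb s1 pv by blast
  have "card {a. 0 < ?b a} \<le> card ?T" using card_mono[OF finT subb] .
  also have "\<dots> \<le> card ?S + 1" using fin by (simp add: card_insert_if)
  finally show "card {a. 0 < ?b a} \<le> card ?S + 1" .
qed

lemma away_update:
  assumes w: "wts A al p" and s: "0 < al s" and g0: "0 \<le> \<gamma>" and g1: "\<gamma> * (1 - al s) \<le> al s"
  shows "wts A (\<lambda>a. (1 + \<gamma>) * al a - \<gamma> * (if a = s then 1 else 0)) (p - \<gamma> *\<^sub>R (s - p))"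
    "card {a. 0 < (1 + \<gamma>) * al a - \<gamma> * (if a = s then 1 else 0)} \<le> card {a. 0 < al a}"
    "\<gamma> * (1 - al s) = al s \<Longrightarrow> card {a. 0 < (1 + \<gamma>) * al a - \<gamma> * (if a = s then 1 else 0)} + 1 \<le> card {a. 0 < al a}"
proof -
  let ?S = "{a. 0 < al a}"
  let ?b = "\<lambda>a. (1 + \<gamma>) * al a - \<gamma> * (if a = s then 1 else 0)"
  have nn: "\<forall>a. 0 \<le> al a" and fin: "finite ?S" and sub: "?S \<subseteq> A" and sum1: "sum al ?S = 1"
    and pe: "p = (\<Sum>a\<in>?S. al a *\<^sub>R a)" using w unfolding wts_def by auto
  have sS: "s \<in> ?S" using s by simp
  have nnb: "\<forall>a. 0 \<le> ?b a" using nn g0 g1 by (auto simp: algebra_simps)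
  have subb: "{a. 0 < ?b a} \<subseteq> ?S"
  proof
    fix a assume "a \<in> {a. 0 < ?b a}"
    then have "0 < ?b a" by simp
    then show "a \<in> ?S" using nn g0 s by (cases "a = s") (auto simp: less_le)
  qed
  have "sum ?b {a. 0 < ?b a} = sum ?b ?S" using supp_sums[OF fin subb nnb] by simp
  also have "\<dots> = (1 + \<gamma>) * sum al ?S - \<gamma> * (\<Sum>a\<in>?S. (if a = s then 1 else 0))"
    by (simp add: sum_subtractf sum_distrib_left)
  also have "\<dots> = 1" using sum1 fin sS by simp
  finally have s1: "sum ?b {a. 0 < ?b a} = 1" .
  have "(\<Sum>a\<in>{a. 0 < ?b a}. ?b a *\<^sub>R a) = (\<Sum>a\<in>?S. ?b a *\<^sub>R a)" using supp_sums[OF fin subb nnb] by simp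
  also have "\<dots> = (\<Sum>a\<in>?S. (1 + \<gamma>) *\<^sub>R (al a *\<^sub>R a) - \<gamma> *\<^sub>R (if a = s then a else 0))"
    by (rule sum.cong) (auto simp: scaleR_diff_left)
  also have "\<dots> = (1 + \<gamma>) *\<^sub>R (\<Sum>a\<in>?S. al a *\<^sub>R a) - \<gamma> *\<^sub>R (\<Sum>a\<in>?S. (if a = s then a else 0))"
    by (simp only: sum_subtractf scaleR_sum_right)
  also have "\<dots> = p - \<gamma> *\<^sub>R (s - p)" using pe fin sS by (simp add: algebra_simps)
  finally have pv: "p - \<gamma> *\<^sub>R (s - p) = (\<Sum>a\<in>{a. 0 < ?b a}. ?b a *\<^sub>R a)" by simp
  have "finite {a. 0 < ?b a}" using fin subb finite_subset by blast
  moreover have "{a. 0 < ?b a} \<subseteq> A" using subb sub by blast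
  ultimately show "wts A ?b (p - \<gamma> *\<^sub>R (s - p))" unfolding wts_def using nnb s1 pv by blast
  show "card {a. 0 < ?b a} \<le> card ?S" using card_mono[OF fin subb] .
  assume eq: "\<gamma> * (1 - al s) = al s"
  have "?b s = 0" using eq by (simp add: algebra_simps)
  then have "{a. 0 < ?b a} \<subseteq> ?S - {s}" using subb by auto
  then have "card {a. 0 < ?b a} \<le> card (?S - {s})" using fin by (intro card_mono) auto
  also have "\<dots> = card ?S - 1" using sS fin by simp
  finally have "card {a. 0 < ?b a} \<le> card ?S - 1" .
  moreover have "0 < card ?S" using sS fin by (auto simp: card_gt_0_iff)
  ultimately show "card {a. 0 < ?b a} + 1 \<le> card ?S" by linarith
qed

lemma reject_double:
  fixes f :: "'a::real_inner \<Rightarrow> real"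
  assumes L: "0 < L" and gd: "0 < g p \<bullet> dd" and gp: "0 < \<gamma>"
    and gq: "\<gamma> \<le> g p \<bullet> dd / (L * (norm dd)\<^sup>2)"
    and rej: "\<not> f (p - \<gamma> *\<^sub>R dd) < f p"
  shows "2 * L \<le> ell f g p (p - \<gamma> *\<^sub>R dd)"
proof -
  have d0: "dd \<noteq> 0" using gd by auto
  then have n0: "0 < (norm dd)\<^sup>2" by simp
  have ne: "p \<noteq> p - \<gamma> *\<^sub>R dd" using d0 gp by simp
  have "\<gamma> * (L * (norm dd)\<^sup>2) \<le> g p \<bullet> dd" using gq L n0 by (simp add: le_divide_eq)
  have e1: "(norm (p - \<gamma> *\<^sub>R dd - p))\<^sup>2 = \<gamma>\<^sup>2 * (norm dd)\<^sup>2" using gp by (simp add: power_mult_distrib)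
  have e2: "g p \<bullet> (p - \<gamma> *\<^sub>R dd - p) = - \<gamma> * (g p \<bullet> dd)" by simp
  have "\<gamma> * (g p \<bullet> dd) \<le> \<bar>f (p - \<gamma> *\<^sub>R dd) - f p - g p \<bullet> (p - \<gamma> *\<^sub>R dd - p)\<bar>"
    unfolding e2 using rej by simp
  moreover have "2 * L * (\<gamma>\<^sup>2 * (norm dd)\<^sup>2) \<le> 2 * (\<gamma> * (g p \<bullet> dd))"
    using \<open>\<gamma> * (L * (norm dd)\<^sup>2) \<le> g p \<bullet> dd\<close> gp
    by (simp add: power2_eq_square mult_left_mono algebra_simps)
  ultimately have "2 * L * (\<gamma>\<^sup>2 * (norm dd)\<^sup>2) \<le> 2 * \<bar>f (p - \<gamma> *\<^sub>R dd) - f p - g p \<bullet> (p - \<gamma> *\<^sub>R dd - p)\<bar>"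
    by (meson order_trans mult_le_cancel_left_pos zero_less_numeral)
  moreover have "ell f g p (p - \<gamma> *\<^sub>R dd) = 2 * \<bar>f (p - \<gamma> *\<^sub>R dd) - f p - g p \<bullet> (p - \<gamma> *\<^sub>R dd - p)\<bar> / (\<gamma>\<^sup>2 * (norm dd)\<^sup>2)"
    unfolding ell_def e1 using ne by simp
  moreover have "0 < \<gamma>\<^sup>2 * (norm dd)\<^sup>2" using n0 gp by simp
  ultimately show ?thesis by (simp add: pos_le_divide_eq)
qed



locale afw =
  fixes A :: "'a::real_inner set" and f :: "'a \<Rightarrow> real" and g :: "'a \<Rightarrow> 'a"
    and r :: "nat \<Rightarrow> real" and xm1 :: 'a
    and x v s d :: "nat \<Rightarrow> 'a" and Ls gmax gam :: "nat \<Rightarrow> real"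
    and alpha :: "nat \<Rightarrow> 'a \<Rightarrow> real" and eta :: real
  assumes run: "acfw_afw_run A f g r xm1 x Ls v s d gmax gam alpha"
    and D: "\<And>t. 0 < r t \<and> r t \<le> 1"
    and L0: "0 < Ls 0"
    and eta2: "eta < 2"
    and eta1: "1 < eta"
begin

abbreviation "fwc t \<equiv> g (x t) \<bullet> (x t - v t) \<ge> g (x t) \<bullet> (s t - x t)"
abbreviation "bad k \<equiv> \<not> (gmax k \<ge> 1 \<or> gam k < gmax k) \<and> Ls (Suc k) \<le> eta * Ls k"

lemma st_all: "\<forall>t. v t \<in> A \<and> (\<forall>u\<in>A. g (x t) \<bullet> v t \<le> g (x t) \<bullet> u) \<and>
        0 < alpha t (s t) \<and> (\<forall>a. 0 < alpha t a \<longrightarrow> g (x t) \<bullet> a \<le> g (x t) \<bullet> s t) \<and>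
        (if g (x t) \<bullet> (x t - v t) \<ge> g (x t) \<bullet> (s t - x t)
         then d t = x t - v t \<and> gmax t = 1
         else d t = s t - x t \<and> gmax t = alpha t (s t) / (1 - alpha t (s t))) \<and>
        gam t = min (g (x t) \<bullet> d t / (Ls t * (norm (d t))\<^sup>2)) (gmax t) \<and>
        Ls (Suc t) = max (ell f g (x t) (x t - gam t *\<^sub>R d t)) (r t * Ls t) \<and>
        (if f (x t - gam t *\<^sub>R d t) < f (x t)
         then x (Suc t) = x t - gam t *\<^sub>R d t \<and>
              alpha (Suc t) =
                (if g (x t) \<bullet> (x t - v t) \<ge> g (x t) \<bullet> (s t - x t)
                 then (\<lambda>a. (1 - gam t) * alpha t a + gam t * (if a = v t then 1 else 0))
                 else (\<lambda>a. (1 + gam t) * alpha t a - gam t * (if a = s t then 1 else 0)))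
         else x (Suc t) = x t \<and> alpha (Suc t) = alpha t)"
  using run unfolding acfw_afw_run_def by blast

lemma st:
  shows "v t \<in> A" "\<forall>u\<in>A. g (x t) \<bullet> v t \<le> g (x t) \<bullet> u" "0 < alpha t (s t)"
    "\<forall>a. 0 < alpha t a \<longrightarrow> g (x t) \<bullet> a \<le> g (x t) \<bullet> s t"
    "fwc t \<Longrightarrow> d t = x t - v t \<and> gmax t = 1"
    "\<not> fwc t \<Longrightarrow> d t = s t - x t \<and> gmax t = alpha t (s t) / (1 - alpha t (s t))"
    "gam t = min (g (x t) \<bullet> d t / (Ls t * (norm (d t))\<^sup>2)) (gmax t)"
    "Ls (Suc t) = max (ell f g (x t) (x t - gam t *\<^sub>R d t)) (r t * Ls t)"
    "f (x t - gam t *\<^sub>R d t) < f (x t) \<Longrightarrow> fwc t \<Longrightarrow> x (Suc t) = x t - gam t *\<^sub>R d t \<and>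
        alpha (Suc t) = (\<lambda>a. (1 - gam t) * alpha t a + gam t * (if a = v t then 1 else 0))"
    "f (x t - gam t *\<^sub>R d t) < f (x t) \<Longrightarrow> \<not> fwc t \<Longrightarrow> x (Suc t) = x t - gam t *\<^sub>R d t \<and>
        alpha (Suc t) = (\<lambda>a. (1 + gam t) * alpha t a - gam t * (if a = s t then 1 else 0))"
    "\<not> f (x t - gam t *\<^sub>R d t) < f (x t) \<Longrightarrow> x (Suc t) = x t \<and> alpha (Suc t) = alpha t"
  using st_all[rule_format, of t] by (auto split: if_split_asm)

lemma Lpos: "0 < Ls t"
proof (induction t)
  case 0 then show ?case using L0 by simp
next
  case (Suc t)
  have "r t * Ls t \<le> Ls (Suc t)" using st(8)[of t] by simp
  moreover have "0 < r t * Ls t" using D[of t] Suc by simp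
  ultimately show ?case by linarith
qed

lemma gam_nonneg:
  assumes w: "wts A (alpha t) (x t)" and gm: "0 \<le> gmax t"
  shows "0 \<le> gam t"
proof -
  have f: "0 \<le> g (x t) \<bullet> (x t - v t)" "0 \<le> g (x t) \<bullet> (s t - x t)"
    using wts_facts[OF w st(2) st(3) st(4)] by auto
  have "0 \<le> g (x t) \<bullet> d t" using f st(5,6)[of t] by (cases "fwc t") auto
  then have "0 \<le> g (x t) \<bullet> d t / (Ls t * (norm (d t))\<^sup>2)" using Lpos[of t] by simp
  then show ?thesis using st(7)[of t] gm by simp
qed

lemma fw_facts:
  assumes w: "wts A (alpha t) (x t)" and c: "fwc t"
  shows "0 \<le> gam t" "gam t \<le> 1" "gmax t = 1" "d t = x t - v t"
  using gam_nonneg[OF w] st(5,7)[of t] c by auto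

lemma aw_facts:
  assumes w: "wts A (alpha t) (x t)" and c: "\<not> fwc t"
  shows "alpha t (s t) < 1" "s t \<noteq> x t" "d t = s t - x t" "0 < gmax t"
    "0 \<le> gam t" "gam t \<le> gmax t" "0 < g (x t) \<bullet> d t"
    "gmax t = alpha t (s t) / (1 - alpha t (s t))"
    "\<And>\<gamma>. \<gamma> \<le> gmax t \<Longrightarrow> \<gamma> * (1 - alpha t (s t)) \<le> alpha t (s t)"
    "gam t = gmax t \<Longrightarrow> gam t * (1 - alpha t (s t)) = alpha t (s t)"
proof -
  have f: "0 \<le> g (x t) \<bullet> (x t - v t)" "0 \<le> g (x t) \<bullet> (s t - x t)"
    using wts_facts[OF w st(2) st(3) st(4)] by auto
  show a1: "alpha t (s t) < 1" "s t \<noteq> x t" using wts_facts(3)[OF w st(2) st(3) st(4) c] by auto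
  show dd: "d t = s t - x t" and gm: "gmax t = alpha t (s t) / (1 - alpha t (s t))" using st(6)[OF c] by auto
  show "0 < gmax t" using a1 st(3)[of t] gm by simp
  then show "0 \<le> gam t" using gam_nonneg[OF w] by simp
  show "gam t \<le> gmax t" using st(7)[of t] by simp
  show "0 < g (x t) \<bullet> d t" using c f dd by simp
  show "\<And>\<gamma>. \<gamma> \<le> gmax t \<Longrightarrow> \<gamma> * (1 - alpha t (s t)) \<le> alpha t (s t)"
    using a1 gm by (simp add: le_divide_eq)
  show "gam t = gmax t \<Longrightarrow> gam t * (1 - alpha t (s t)) = alpha t (s t)"
    using a1 gm by simp
qed

lemma card_Suc_split:
  "card {k. k < Suc t \<and> P k} = card {k. k < t \<and> P k} + (if P t then 1 else 0)"
proof -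
  have "{k. k < Suc t \<and> P k} = (if P t then insert t {k. k < t \<and> P k} else {k. k < t \<and> P k})"
    by (auto simp: less_Suc_eq)
  then show ?thesis by simp
qed

lemma inv: "wts A (alpha t) (x t) \<and> card {a. 0 < alpha t a} + 2 * card {k. k < t \<and> bad k} \<le> 1 + t"
proof (induction t)
  case 0
  have "xm1 \<in> A \<and> x 0 \<in> A \<and> alpha 0 = (\<lambda>a. if a = x 0 then 1 else 0)"
    using run unfolding acfw_afw_run_def by blast
  moreover have "{a. 0 < (if a = x 0 then 1 else (0::real))} = {x 0}" by auto
  ultimately show ?case unfolding wts_def by auto
next
  case (Suc t)
  have w: "wts A (alpha t) (x t)" and cI: "card {a. 0 < alpha t a} + 2 * card {k. k < t \<and> bad k} \<le> 1 + t"
    using Suc by auto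
  let ?B = "card {k. k < t \<and> bad k}"
  let ?c = "card {a. 0 < alpha t a}"
  have bs: "card {k. k < Suc t \<and> bad k} = ?B + (if bad t then 1 else 0)" by (rule card_Suc_split)
  show ?case
  proof (cases "fwc t")
    case True
    note F = fw_facts[OF w True]
    have nb: "\<not> bad t" using F by simp
    show ?thesis
    proof (cases "f (x t - gam t *\<^sub>R d t) < f (x t)")
      case True
      note U = fw_update[OF w st(1) F(1,2)]
      have e: "x (Suc t) = x t - gam t *\<^sub>R (x t - v t)"
        "alpha (Suc t) = (\<lambda>a. (1 - gam t) * alpha t a + gam t * (if a = v t then 1 else 0))"
        using st(9)[OF True \<open>fwc t\<close>] F(4) by auto
      have w': "wts A (alpha (Suc t)) (x (Suc t))" unfolding e by (rule U(1))
      have c': "card {a. 0 < alpha (Suc t) a} \<le> ?c + 1" unfolding e by (rule U(2))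
      have "card {k. k < Suc t \<and> bad k} = ?B" using bs nb by simp
      then show ?thesis using w' c' cI by simp
    next
      case False
      have "card {k. k < Suc t \<and> bad k} = ?B" using bs nb by simp
      then show ?thesis using st(11)[OF False] w cI by simp
    qed
  next
    case False
    note F = aw_facts[OF w False]
    show ?thesis
    proof (cases "f (x t - gam t *\<^sub>R d t) < f (x t)")
      case True
      note U = away_update[OF w st(3) F(5) F(9)[OF F(6)]]
      have e: "x (Suc t) = x t - gam t *\<^sub>R (s t - x t)"
        "alpha (Suc t) = (\<lambda>a. (1 + gam t) * alpha t a - gam t * (if a = s t then 1 else 0))"
        using st(10)[OF True \<open>\<not> fwc t\<close>] F(3) by auto
      show ?thesis
      proof (cases "bad t")
        case True
        then have "gam t = gmax t" using F(6) by simp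
        then have c': "card {a. 0 < alpha (Suc t) a} + 1 \<le> ?c" unfolding e using U(3) F(10) by simp
        have w': "wts A (alpha (Suc t)) (x (Suc t))" unfolding e by (rule U(1))
        have "card {k. k < Suc t \<and> bad k} = ?B + 1" using bs True by simp
        then show ?thesis using w' c' cI by simp
      next
        case False
        have w': "wts A (alpha (Suc t)) (x (Suc t))" unfolding e by (rule U(1))
        have c': "card {a. 0 < alpha (Suc t) a} \<le> ?c" unfolding e by (rule U(2))
        have "card {k. k < Suc t \<and> bad k} = ?B" using bs False by simp
        then show ?thesis using w' c' cI by simp
      qed
    next
      case rej: False
      have nb: "\<not> bad t"
      proof
        assume b: "bad t"
        then have ge: "gam t = gmax t" using F(6) by simp
        have "0 < gam t" using ge F(4) by simp
        moreover have "gam t \<le> g (x t) \<bullet> d t / (Ls t * (norm (d t))\<^sup>2)" using st(7)[of t] by simp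
        ultimately have "2 * Ls t \<le> ell f g (x t) (x t - gam t *\<^sub>R d t)"
          using reject_double[of "Ls t" g "x t" "d t" "gam t" f] Lpos[of t] F(7) rej by blast
        then have "2 * Ls t \<le> Ls (Suc t)" using st(8)[of t] by simp
        moreover have "Ls (Suc t) \<le> eta * Ls t" using b by simp
        moreover have "eta * Ls t < 2 * Ls t" using eta2 Lpos[of t] by simp
        ultimately show False by linarith
      qed
      have "card {k. k < Suc t \<and> bad k} = ?B" using bs nb by simp
      then show ?thesis using st(11)[OF rej] w cI by simp
    qed
  qed
qed

lemma Lbound: "Ls 0 * eta ^ card {k. k < t \<and> \<not> Ls (Suc k) \<le> eta * Ls k} * (\<Prod>k<t. r k) \<le> Ls t"
proof (induction t)
  case 0 then show ?case by simp
next
  case (Suc t)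
  let ?N = "card {k. k < t \<and> \<not> Ls (Suc k) \<le> eta * Ls k}"
  have cs: "card {k. k < Suc t \<and> \<not> Ls (Suc k) \<le> eta * Ls k} = ?N + (if \<not> Ls (Suc t) \<le> eta * Ls t then 1 else 0)"
    by (rule card_Suc_split)
  have pr: "(\<Prod>k<Suc t. r k) = (\<Prod>k<t. r k) * r t" by simp
  have rt: "0 < r t" "r t \<le> 1" using D[of t] by auto
  have p0: "0 \<le> Ls 0 * eta ^ ?N * (\<Prod>k<t. r k)"
  proof -
    have "0 \<le> (\<Prod>k<t. r k)" using D by (simp add: prod_nonneg less_imp_le)
    then show ?thesis using L0 eta1 by simp
  qed
  have rL: "r t * Ls t \<le> Ls (Suc t)" using st(8)[of t] by simp
  show ?case
  proof (cases "Ls (Suc t) \<le> eta * Ls t")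
    case True
    have "Ls 0 * eta ^ ?N * (\<Prod>k<t. r k) * r t \<le> Ls t * r t"
      using Suc.IH rt by (simp add: mult_right_mono)
    then show ?thesis using cs True pr rL by (simp add: mult.assoc mult.commute)
  next
    case False
    have "Ls 0 * eta ^ (?N + 1) * (\<Prod>k<t. r k) * r t = eta * (Ls 0 * eta ^ ?N * (\<Prod>k<t. r k)) * r t"
      by (simp add: algebra_simps)
    also have "\<dots> \<le> eta * (Ls 0 * eta ^ ?N * (\<Prod>k<t. r k))"
      using rt p0 eta1 by (simp add: mult_left_le)
    also have "\<dots> \<le> eta * Ls t" using Suc.IH eta1 by simp
    also have "\<dots> \<le> Ls (Suc t)" using False by simp
    finally show ?thesis using cs False pr by simp
  qed
qed

end



theorem lemma8:
  fixes A :: "'a::euclidean_space set" and f :: "'a \<Rightarrow> real" and g :: "'a \<Rightarrow> 'a"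
    and Lf \<eta> rp :: real and r :: "nat \<Rightarrow> real" and xm1 :: 'a
    and x v s d :: "nat \<Rightarrow> 'a" and Ls gmax gam :: "nat \<Rightarrow> real"
    and alpha :: "nat \<Rightarrow> 'a \<Rightarrow> real"
  assumes "compact A"
    and grad: "\<And>y. (f has_derivative (\<lambda>h. g y \<bullet> h)) (at y)"
    and Lf_pos: "0 < Lf"
    and lip: "\<And>y z. norm (g y - g z) \<le> Lf * norm (y - z)"
    and "1 < \<eta>" "\<eta> < 2"
    and D: "\<And>t. 0 < r t \<and> r t \<le> 1"
    and Dprod: "(\<lambda>n. \<Prod>t<n. r t) \<longlonglongrightarrow> rp" "0 < rp" "rp \<le> 1"
    and run: "acfw_afw_run A f g r xm1 x Ls v s d gmax gam alpha"
    and L0: "0 < Ls 0"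
  shows "(\<forall>t. norm (d t) \<le> diameter A \<and>
              (\<forall>\<gamma>. 0 \<le> \<gamma> \<and> \<gamma> \<le> gmax t \<longrightarrow> x t - \<gamma> *\<^sub>R d t \<in> convex hull A))
       \<and> infinite {t. gmax t \<ge> 1 \<or> gam t < gmax t}
       \<and> (\<forall>t. real (card {k \<in> {0..t}. (gmax k \<ge> 1 \<or> gam k < gmax k) \<and> Ls (Suc k) \<le> \<eta> * Ls k})
              \<ge> (real t + 1) / 2 - of_int \<lfloor>log \<eta> (Lf / (rp * Ls 0))\<rfloor>)
       \<and> (convex_on UNIV f \<longrightarrow>
            (\<forall>xs. xs \<in> convex hull A \<and> (\<forall>y\<in>convex hull A. f xs \<le> f y) \<longrightarrow>
               (\<forall>t. g (x t) \<bullet> d t \<ge> (f (x t) - f xs) / 1)))"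
proof -
  interpret afw A f g r xm1 x v s d Ls gmax gam alpha \<eta>
    using run D L0 \<open>1 < \<eta>\<close> \<open>\<eta> < 2\<close> by unfold_locales auto
  have bA: "bounded A" using \<open>compact A\<close> by (rule compact_imp_bounded)
  have w: "\<And>t. wts A (alpha t) (x t)" using inv by blast
  have sA: "\<And>t. s t \<in> A" using w st(3) unfolding wts_def by blast
  have P1: "norm (d t) \<le> diameter A \<and>
              (\<forall>\<gamma>. 0 \<le> \<gamma> \<and> \<gamma> \<le> gmax t \<longrightarrow> x t - \<gamma> *\<^sub>R d t \<in> convex hull A)" for t
  proof (cases "fwc t")
    case True
    note F = fw_facts[OF w True]
    have "norm (d t) \<le> diameter A" using hull_diam(1)[OF bA st(1) wts_hull[OF w]] F(4) by simp
    moreover have "x t - \<gamma> *\<^sub>R d t \<in> convex hull A" if "0 \<le> \<gamma>" "\<gamma> \<le> gmax t" for \<gamma>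
      using wts_hull[OF fw_update(1)[OF w st(1), of \<gamma>]] that F(3,4) by simp
    ultimately show ?thesis by blast
  next
    case False
    note F = aw_facts[OF w False]
    have "norm (d t) \<le> diameter A" using hull_diam(2)[OF bA sA wts_hull[OF w]] F(3) by simp
    moreover have "x t - \<gamma> *\<^sub>R d t \<in> convex hull A" if "0 \<le> \<gamma>" "\<gamma> \<le> gmax t" for \<gamma>
      using wts_hull[OF away_update(1)[OF w st(3) that(1) F(9)[OF that(2)]]] F(3) by simp
    ultimately show ?thesis by blast
  qed
  have Lup: "Ls t \<le> Lf" for t
  proof (induction t)
    case 0
    have "Ls 0 = ell f g xm1 (x 0)" using run unfolding acfw_afw_run_def by blast
    then show ?case using ell_le[OF grad lip] Lf_pos by simp
  next
    case (Suc t)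
    have "ell f g (x t) (x t - gam t *\<^sub>R d t) \<le> Lf" using ell_le[OF grad lip] Lf_pos by simp
    moreover have "r t * Ls t \<le> Lf" using Suc D[of t] Lpos[of t] by (smt (verit) mult_left_le_one_le)
    ultimately show ?case using st(8)[of t] by simp
  qed
  have dec: "decseq (\<lambda>n. \<Prod>t<n. r t)"
  proof (rule decseq_SucI)
    fix n
    have "0 \<le> (\<Prod>t<n. r t)" using D by (simp add: prod_nonneg less_imp_le)
    then show "(\<Prod>t<Suc n. r t) \<le> (\<Prod>t<n. r t)" using D[of n] by (simp add: mult_left_le)
  qed
  have prge: "rp \<le> (\<Prod>t<n. r t)" for n using decseq_ge[OF dec Dprod(1)] .
  define F where "F = \<lfloor>log \<eta> (Lf / (rp * Ls 0))\<rfloor>"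
  have P3: "real (card {k \<in> {0..t}. (gmax k \<ge> 1 \<or> gam k < gmax k) \<and> Ls (Suc k) \<le> \<eta> * Ls k})
              \<ge> (real t + 1) / 2 - of_int F" for t
  proof -
    let ?GI = "{k \<in> {0..t}. (gmax k \<ge> 1 \<or> gam k < gmax k) \<and> Ls (Suc k) \<le> \<eta> * Ls k}"
    let ?NI = "{k. k < Suc t \<and> \<not> Ls (Suc k) \<le> \<eta> * Ls k}"
    let ?BD = "{k. k < Suc t \<and> bad k}"
    have "{0..t} \<subseteq> ?GI \<union> ?NI \<union> ?BD" by auto
    then have "card {0..t} \<le> card (?GI \<union> ?NI \<union> ?BD)" by (intro card_mono) auto
    also have "\<dots> \<le> card ?GI + card ?NI + card ?BD" by (meson card_Un_le add_le_mono order_trans le_refl)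
    finally have c1: "Suc t \<le> card ?GI + card ?NI + card ?BD" by simp
    have "1 \<le> card {a. 0 < alpha (Suc t) a}" by (rule wts_nonempty[OF w])
    then have c2: "2 * card ?BD \<le> Suc t" using inv[of "Suc t"] by simp
    let ?N = "card ?NI"
    have "Ls 0 * \<eta> ^ ?N * rp \<le> Ls 0 * \<eta> ^ ?N * (\<Prod>k<Suc t. r k)"
      using prge[of "Suc t"] L0 \<open>1 < \<eta>\<close> by simp
    also have "\<dots> \<le> Ls (Suc t)" by (rule Lbound)
    also have "\<dots> \<le> Lf" by (rule Lup)
    finally have "\<eta> ^ ?N * (rp * Ls 0) \<le> Lf" by (simp add: algebra_simps)
    then have "\<eta> ^ ?N \<le> Lf / (rp * Ls 0)" using Dprod(2) L0 by (simp add: le_divide_eq)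
    then have "real ?N \<le> log \<eta> (Lf / (rp * Ls 0))" using le_log_of_power \<open>1 < \<eta>\<close> by blast
    then have "int ?N \<le> F" unfolding F_def by (simp add: le_floor_iff)
    then have c3: "real ?N \<le> of_int F" by linarith
    have r1: "real t + 1 \<le> real (card ?GI) + real ?N + real (card ?BD)"
    proof -
      have "real (Suc t) \<le> real (card ?GI + card ?NI + card ?BD)" using c1 by (simp only: of_nat_le_iff)
      then show ?thesis by simp
    qed
    have r2: "2 * real (card ?BD) \<le> real t + 1"
    proof -
      have "real (2 * card ?BD) \<le> real (Suc t)" using c2 by (simp only: of_nat_le_iff)
      then show ?thesis by simp
    qed
    have key: "\<And>a n bb (tt::real) F'. tt + 1 \<le> a + n + bb \<Longrightarrow> 2*bb \<le> tt+1 \<Longrightarrow> n \<le> F' \<Longrightarrow> (tt+1)/2 - F' \<le> a"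
      by (simp add: field_simps)
    show ?thesis by (rule key[OF r1 r2 c3])
  qed
  have P2: "infinite {t. gmax t \<ge> 1 \<or> gam t < gmax t}"
  proof
    assume fin: "finite {t. gmax t \<ge> 1 \<or> gam t < gmax t}"
    define M where "M = card {t. gmax t \<ge> 1 \<or> gam t < gmax t}"
    define t where "t = 2 * (M + nat \<bar>F\<bar> + 1)"
    have "card {k \<in> {0..t}. (gmax k \<ge> 1 \<or> gam k < gmax k) \<and> Ls (Suc k) \<le> \<eta> * Ls k} \<le> M"
      unfolding M_def by (rule card_mono[OF fin]) auto
    then have "(real t + 1) / 2 - of_int F \<le> real M" using P3[of t] by linarith
    moreover have "real t = 2 * (real M + real (nat \<bar>F\<bar>) + 1)" unfolding t_def by simp
    moreover have "of_int F \<le> real (nat \<bar>F\<bar>)" by simp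
    moreover have "\<And>(tt::real) FF m nn. (tt + 1) / 2 - FF \<le> m \<Longrightarrow> tt = 2 * (m + nn + 1) \<Longrightarrow> FF \<le> nn \<Longrightarrow> False"
      by (simp add: field_simps)
    ultimately show False by blast
  qed
  have P4: "g (x t) \<bullet> d t \<ge> (f (x t) - f xs) / 1"
    if cvx: "convex_on UNIV f" and xs: "xs \<in> convex hull A" for xs t
  proof -
    have h1: "g (x t) \<bullet> v t \<le> g (x t) \<bullet> xs" by (rule hull_min_lin[OF st(2) xs])
    have h2: "g (x t) \<bullet> (xs - x t) \<le> f xs - f (x t)" by (rule convex_grad[OF grad cvx])
    have "f (x t) - f xs \<le> g (x t) \<bullet> (x t - v t)" using h1 h2 by (simp add: inner_diff_right)
    moreover have "g (x t) \<bullet> (x t - v t) \<le> g (x t) \<bullet> d t"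
    proof (cases "fwc t")
      case True then show ?thesis using fw_facts(4)[OF w True] by simp
    next
      case False then show ?thesis using aw_facts(3)[OF w False] by simp
    qed
    ultimately show ?thesis by simp
  qed
  show ?thesis using P1 P2 P3 P4 unfolding F_def by blast
qed


end
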